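(* Let $G$ be a group with finite generating set $S$. Then $G$ is a torsion group if and only if the skeleton subshift $X_{G,S}$ is aperiodic.
   Context: A group is torsion if every element has finite order. The skeleton subshift $X_{G,S}\subseteq(S\cup S^{-1})^{\mathbb{Z}}$ is the set of bi-infinite sequences none of whose non-empty finite factors $x_ix_{i+1}\cdots x_j$ represents $1_G$. With the shift $\sigma(x)_i=x_{i+1}$, a sequence $x$ is periodic if $\sigma^k(x)=x$ for some $k\neq0$; a set of sequences is aperiodic if it contains no periodic sequence. *)

theory Defs
  imports "HOL-Algebra.Generated_Groups"
begin

definition torsion_group :: "('a, 'b) monoid_scheme \<Rightarrow> bool" where
  "torsion_group G \<longleftrightarrow> (\<forall>g \<in> carrier G. \<exists>n::nat. n > 0 \<and> g [^]\<^bsub>G\<^esub> n = \<one>\<^bsub>G\<^esub>)"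

definition word_prod :: "('a, 'b) monoid_scheme \<Rightarrow> 'a list \<Rightarrow> 'a" where
  "word_prod G w = foldr (\<lambda>a b. a \<otimes>\<^bsub>G\<^esub> b) w \<one>\<^bsub>G\<^esub>"

definition skeleton :: "('a, 'b) monoid_scheme \<Rightarrow> 'a set \<Rightarrow> (int \<Rightarrow> 'a) set" where
  "skeleton G S = {x. (\<forall>i. x i \<in> S \<union> (\<lambda>s. inv\<^bsub>G\<^esub> s) ` S) \<and>
      (\<forall>i j. i \<le> j \<longrightarrow> word_prod G (map x [i..j]) \<noteq> \<one>\<^bsub>G\<^esub>)}"

definition shift :: "int \<Rightarrow> (int \<Rightarrow> 'a) \<Rightarrow> (int \<Rightarrow> 'a)" where
  "shift k x = (\<lambda>i. x (i + k))"

definition periodic :: "(int \<Rightarrow> 'a) \<Rightarrow> bool" where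
  "periodic x \<longleftrightarrow> (\<exists>k. k \<noteq> 0 \<and> shift k x = x)"

definition aperiodic :: "(int \<Rightarrow> 'a) set \<Rightarrow> bool" where
  "aperiodic X \<longleftrightarrow> (\<forall>x \<in> X. \<not> periodic x)"

end

theory Submission
  imports Defs
begin

lemma word_prod_Nil [simp]: "word_prod G [] = \<one>\<^bsub>G\<^esub>"
  by (simp add: word_prod_def)

lemma word_prod_Cons [simp]: "word_prod G (a # w) = a \<otimes>\<^bsub>G\<^esub> word_prod G w"
  by (simp add: word_prod_def)

context group
begin

lemma word_prod_closed [simp]: "set w \<subseteq> carrier G \<Longrightarrow> word_prod G w \<in> carrier G"
  by (induct w) auto

lemma word_prod_append:
  "set a \<subseteq> carrier G \<Longrightarrow> set b \<subseteq> carrier G \<Longrightarrow>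
   word_prod G (a @ b) = word_prod G a \<otimes> word_prod G b"
  by (induct a) (auto simp: m_assoc)

lemma word_prod_concat_replicate:
  "set w \<subseteq> carrier G \<Longrightarrow> word_prod G (concat (replicate q w)) = word_prod G w [^] q"
proof (induct q)
  case 0 then show ?case by simp
next
  case (Suc q)
  have "set (concat (replicate q w)) \<subseteq> carrier G" using Suc.prems by auto
  then have "word_prod G (concat (replicate (Suc q) w)) = word_prod G w \<otimes> word_prod G w [^] q"
    using Suc by (simp add: word_prod_append)
  then show ?case using Suc.prems by (metis nat_pow_Suc nat_pow_Suc2 word_prod_closed)
qed

lemma gen_word:
  assumes "S \<subseteq> carrier G" "h \<in> generate G S"
  shows "\<exists>w. set w \<subseteq> S \<union> (\<lambda>s. inv s) ` S \<and> word_prod G w = h"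
  using assms(2)
proof (induct rule: generate.induct)
  case one
  then show ?case by (rule exI[of _ "[]"]) simp
next
  case (incl h)
  then show ?case using assms(1) by (intro exI[of _ "[h]"]) auto
next
  case (inv h)
  then show ?case using assms(1) by (intro exI[of _ "[inv h]"]) auto
next
  case (eng h1 h2)
  then obtain w1 w2 where "set w1 \<subseteq> S \<union> (\<lambda>s. inv s) ` S" "word_prod G w1 = h1"
    "set w2 \<subseteq> S \<union> (\<lambda>s. inv s) ` S" "word_prod G w2 = h2" by blast
  moreover have "S \<union> (\<lambda>s. inv s) ` S \<subseteq> carrier G" using assms(1) by auto
  ultimately have "set w1 \<subseteq> carrier G" "set w2 \<subseteq> carrier G" by blast+
  with \<open>word_prod G w1 = h1\<close> \<open>word_prod G w2 = h2\<close> \<open>set w1 \<subseteq> S \<union> (\<lambda>s. inv s) ` S\<close>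
    \<open>set w2 \<subseteq> S \<union> (\<lambda>s. inv s) ` S\<close> show ?case
    by (intro exI[of _ "w1 @ w2"]) (auto simp: word_prod_append)
qed

lemma pow_swap:
  assumes "a \<in> carrier G" "b \<in> carrier G"
  shows "(b \<otimes> a) [^] (m::nat) \<otimes> b = b \<otimes> (a \<otimes> b) [^] m"
proof (induct m)
  case 0 then show ?case using assms by simp
next
  case (Suc m)
  have "(b \<otimes> a) [^] Suc m \<otimes> b = ((b \<otimes> a) [^] m \<otimes> b) \<otimes> (a \<otimes> b)"
    using assms by (simp add: m_assoc)
  also have "\<dots> = b \<otimes> ((a \<otimes> b) [^] m \<otimes> (a \<otimes> b))"
    using Suc assms by (simp add: m_assoc)
  finally show ?case by simp
qed

definition inford :: "'a \<Rightarrow> bool" where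
  "inford g \<longleftrightarrow> g \<in> carrier G \<and> (\<forall>m::nat. m > 0 \<longrightarrow> g [^] m \<noteq> \<one>)"

lemma inford_swap:
  assumes "a \<in> carrier G" "b \<in> carrier G" "inford (a \<otimes> b)"
  shows "inford (b \<otimes> a)"
  unfolding inford_def
proof (intro conjI allI impI)
  show "b \<otimes> a \<in> carrier G" using assms by simp
  fix m :: nat assume "m > 0"
  show "(b \<otimes> a) [^] m \<noteq> \<one>"
  proof
    assume h: "(b \<otimes> a) [^] m = \<one>"
    have "b \<otimes> (a \<otimes> b) [^] m = b" using pow_swap[OF assms(1,2), of m] h assms by simp
    then have "(a \<otimes> b) [^] m = \<one>" using assms by simp
    then show False using assms(3) \<open>m > 0\<close> unfolding inford_def by blast
  qed
qed

lemma inford_pow: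
  assumes "inford g" "q > 0"
  shows "inford (g [^] (q::nat))"
  using assms unfolding inford_def by (auto simp: nat_pow_pow)

end

lemma map_periodic:
  assumes "\<And>k. f (k + K) = f k"
  shows "map f [0..<q * K + r] = concat (replicate q (map f [0..<K])) @ map f [0..<r]"
proof (induct q)
  case 0 then show ?case by simp
next
  case (Suc q)
  have "[0..<Suc q * K + r] = [0..<K] @ [K..<K + (q * K + r)]"
    by (simp add: upt_add_eq_append[symmetric] algebra_simps)
  moreover have "map f [K..<K + (q * K + r)] = map f [0..<q * K + r]"
  proof -
    have "[K..<K + (q * K + r)] = map (\<lambda>k. k + K) [0..<q * K + r]"
      by (simp add: map_add_upt add.commute)
    then show ?thesis using assms by (simp add: comp_def)
  qed
  ultimately show ?case using Suc by simp
qed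

lemma map_upto_eq:
  assumes "i \<le> j"
  shows "map x [i..j] = map (\<lambda>k. x (i + int k)) [0..<nat (j - i + 1)]"
  by (rule nth_equalityI) (auto simp: nth_upto)

lemma mod_arith:
  assumes "n > 0"
  shows "nat ((i + int k) mod int n) = (nat (i mod int n) + k mod n) mod n"
proof -
  have "int ((nat (i mod int n) + k mod n) mod n) = (i mod int n + int k mod int n) mod int n"
    using assms by (simp add: of_nat_mod)
  also have "\<dots> = (i + int k) mod int n" by (simp add: mod_add_eq)
  finally show ?thesis by simp
qed

lemma map_nth_take: "r \<le> length w \<Longrightarrow> map (\<lambda>k. w ! k) [0..<r] = take r w"
  by (rule nth_equalityI) auto

theorem proposition9:
  fixes G (structure) and S :: "'a set"
  assumes "group G" and "S \<subseteq> carrier G" and "finite S"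
    and "generate G S = carrier G"
  shows "torsion_group G \<longleftrightarrow> aperiodic (skeleton G S)"
proof -
  interpret group G by fact
  define T where "T = S \<union> (\<lambda>s. inv s) ` S"
  have TC: "T \<subseteq> carrier G" using assms(2) by (auto simp: T_def)
  show ?thesis
  proof
    assume tor: "torsion_group G"
    show "aperiodic (skeleton G S)"
      unfolding aperiodic_def
    proof (intro ballI notI)
      fix x assume xs: "x \<in> skeleton G S" and "periodic x"
      then obtain k where "k \<noteq> 0" "shift k x = x" unfolding periodic_def by blast
      then have per: "\<And>i. x (i + k) = x i" unfolding shift_def by metis
      obtain K :: nat where K: "K > 0" "\<And>i. x (i + int K) = x i"
      proof (cases "k > 0")
        case True then show ?thesis using per that[of "nat k"] by simp
      next
        case False
        have "\<And>i. x (i + int (nat (-k))) = x i"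
        proof -
          fix i
          have "x (i - k + k) = x (i - k)" by (rule per)
          then show "x (i + int (nat (-k))) = x i" using False by simp
        qed
        then show ?thesis using False \<open>k \<noteq> 0\<close> that[of "nat (-k)"] by simp
      qed
      define f where "f n = x (int n)" for n
      have fper: "\<And>n. f (n + K) = f n" unfolding f_def using K(2) by (metis of_nat_add)
      have xT: "\<And>i. x i \<in> T" using xs unfolding skeleton_def T_def by blast
      have fC: "set (map f [0..<K]) \<subseteq> carrier G" using xT TC unfolding f_def by auto
      define g where "g = word_prod G (map f [0..<K])"
      have gC: "g \<in> carrier G" unfolding g_def using fC by simp
      then obtain m :: nat where m: "m > 0" "g [^] m = \<one>"
        using tor unfolding torsion_group_def by blast
      have mK: "m * K > 0" using m K by simp
      have "map x [0..int (m * K) - 1] = map (\<lambda>k. x (0 + int k)) [0..<nat (int (m * K) - 1 - 0 + 1)]"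
        using mK by (intro map_upto_eq) simp
      also have "\<dots> = map f [0..<m * K + 0]" proof -
        have e: "nat (int (m * K) - 1 - 0 + 1) = m * K" by (simp only: diff_zero diff_add_cancel nat_int)
        show ?thesis by (simp only: e add_0 add_0_right f_def[abs_def])
      qed
      also have "\<dots> = concat (replicate m (map f [0..<K])) @ map f [0..<0]"
        by (rule map_periodic[of f K, OF fper])
      finally have "word_prod G (map x [0..int (m * K) - 1]) = g [^] m"
        using word_prod_concat_replicate[OF fC] unfolding g_def by simp
      then have "word_prod G (map x [0..int (m * K) - 1]) = \<one>" using m by simp
      moreover have "0 \<le> int (m * K) - 1" using mK by simp
      ultimately show False using xs unfolding skeleton_def by blast
    qed
  next
    assume ap: "aperiodic (skeleton G S)"
    show "torsion_group G"
    proof (rule ccontr)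
      assume "\<not> torsion_group G"
      then obtain g where g: "g \<in> carrier G" "\<forall>m::nat. m > 0 \<longrightarrow> g [^] m \<noteq> \<one>"
        unfolding torsion_group_def by blast
      then have ig: "inford g" unfolding inford_def by blast
      define P where "P w \<longleftrightarrow> set w \<subseteq> T \<and> inford (word_prod G w)" for w
      obtain w0 where "set w0 \<subseteq> T" "word_prod G w0 = g"
        using gen_word[OF assms(2)] g(1) assms(4) unfolding T_def by blast
      then have "P w0" using ig unfolding P_def by simp
      then obtain w where w: "P w" and wmin: "\<And>v. P v \<Longrightarrow> length w \<le> length v"
        using ex_has_least_nat[of P w0 length] by blast
      define n where "n = length w"
      have n0: "n > 0"
      proof (rule ccontr)
        assume "\<not> n > 0"
        then have "w = []" unfolding n_def by simp
        then show False using w unfolding P_def inford_def by force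
      qed
      have key: "word_prod G (concat (replicate q w') @ take r w') \<noteq> \<one>"
        if w': "P w'" "length w' = n" and r: "r < n" and qr: "q > 0 \<or> r > 0" for w' q r
      proof
        assume eq1: "word_prod G (concat (replicate q w') @ take r w') = \<one>"
        have wC: "set w' \<subseteq> carrier G" using w' TC unfolding P_def by auto
        have tC: "set (take r w') \<subseteq> carrier G" using wC by (meson order_trans set_take_subset)
        have dC: "set (drop r w') \<subseteq> carrier G" using wC by (meson order_trans set_drop_subset)
        have cC: "set (concat (replicate q w')) \<subseteq> carrier G" using wC by auto
        define a where "a = word_prod G (take r w')"
        define b where "b = word_prod G (drop r w')"
        define g' where "g' = word_prod G w'"
        have aC: "a \<in> carrier G" and bC: "b \<in> carrier G" and g'C: "g' \<in> carrier G"
          using tC dC wC by (auto simp: a_def b_def g'_def)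
        have gab: "g' = a \<otimes> b" unfolding g'_def a_def b_def
          using word_prod_append[OF tC dC] by simp
        have e: "g' [^] q \<otimes> a = \<one>" using eq1 word_prod_append[OF cC tC]
            word_prod_concat_replicate[OF wC] unfolding a_def g'_def by simp
        have ig': "inford g'" using w' unfolding P_def g'_def by simp
        show False
        proof (cases "r = 0")
          case True
          then have "a = \<one>" unfolding a_def by simp
          then have "g' [^] q = \<one>" using e g'C by simp
          then show False using ig' True qr unfolding inford_def by blast
        next
          case False
          have "g' [^] Suc q = g' [^] q \<otimes> (a \<otimes> b)" using gab by simp
          also have "\<dots> = (g' [^] q \<otimes> a) \<otimes> b" using aC bC g'C by (simp add: m_assoc)
          also have "\<dots> = b" using e bC by simp
          finally have "inford b" using inford_pow[OF ig', of "Suc q"] by simp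
          moreover have "set (drop r w') \<subseteq> T" using w' unfolding P_def
            by (meson order_trans set_drop_subset)
          ultimately have "P (drop r w')" unfolding P_def b_def by simp
          then have "length w \<le> length (drop r w')" by (rule wmin)
          then show False using False r w' unfolding n_def by simp
        qed
      qed
      have rot: "P (rotate s w)" for s
      proof -
        define s' where "s' = s mod length w"
        have wC: "set w \<subseteq> carrier G" using w TC unfolding P_def by auto
        have tC: "set (take s' w) \<subseteq> carrier G" using wC by (meson order_trans set_take_subset)
        have dC: "set (drop s' w) \<subseteq> carrier G" using wC by (meson order_trans set_drop_subset)
        have eqw: "word_prod G (take s' w) \<otimes> word_prod G (drop s' w) = word_prod G w"
          using word_prod_append[OF tC dC] by (simp only: append_take_drop_id)
        have "inford (word_prod G w)" using w unfolding P_def by blast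
        then have "inford (word_prod G (take s' w) \<otimes> word_prod G (drop s' w))"
          by (simp only: eqw)
        then have "inford (word_prod G (drop s' w) \<otimes> word_prod G (take s' w))"
          by (rule inford_swap[OF word_prod_closed[OF tC] word_prod_closed[OF dC]])
        moreover have "word_prod G (rotate s w) = word_prod G (drop s' w) \<otimes> word_prod G (take s' w)"
          unfolding rotate_drop_take s'_def[symmetric] by (rule word_prod_append[OF dC tC])
        ultimately have "inford (word_prod G (rotate s w))" by simp
        then show ?thesis using w unfolding P_def by simp
      qed
      define x where "x i = w ! nat (i mod int n)" for i
      have xin: "x i \<in> set w" for i
      proof -
        have "nat (i mod int n) < n" using n0 by (simp add: nat_less_iff)
        then show ?thesis unfolding x_def n_def by simp
      qed
      have "x \<in> skeleton G S"
        unfolding skeleton_def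
      proof (intro CollectI conjI allI impI)
        fix i show "x i \<in> S \<union> (\<lambda>s. inv s) ` S" using xin w unfolding P_def T_def by blast
      next
        fix i j :: int assume ij: "i \<le> j"
        define m where "m = nat (j - i + 1)"
        have m0: "m > 0" using ij unfolding m_def by simp
        define s where "s = nat (i mod int n)"
        define w' where "w' = rotate s w"
        have lw': "length w' = n" unfolding w'_def n_def by simp
        have "map x [i..j] = map (\<lambda>k. x (i + int k)) [0..<m]"
          unfolding m_def by (rule map_upto_eq[OF ij])
        also have "\<dots> = map (\<lambda>k. w' ! (k mod n)) [0..<m]"
        proof (rule map_cong[OF refl])
          fix k
          have "w' ! (k mod n) = w ! ((s + k mod n) mod n)"
            unfolding w'_def using n0 by (simp add: nth_rotate n_def)
          then show "x (i + int k) = w' ! (k mod n)"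
            unfolding x_def s_def using mod_arith[OF n0, of i k] by simp
        qed
        also have "\<dots> = map (\<lambda>k. w' ! (k mod n)) [0..<(m div n) * n + m mod n]"
          by simp
        also have "\<dots> = concat (replicate (m div n) (map (\<lambda>k. w' ! (k mod n)) [0..<n]))
             @ map (\<lambda>k. w' ! (k mod n)) [0..<m mod n]"
          by (rule map_periodic) simp
        also have "map (\<lambda>k. w' ! (k mod n)) [0..<n] = w'"
        proof -
          have "map (\<lambda>k. w' ! (k mod n)) [0..<n] = map (\<lambda>k. w' ! k) [0..<length w']"
            using lw' by (intro map_cong) auto
          then show ?thesis by (simp only: map_nth)
        qed
        also have "map (\<lambda>k. w' ! (k mod n)) [0..<m mod n] = take (m mod n) w'"
        proof -
          have "map (\<lambda>k. w' ! (k mod n)) [0..<m mod n] = map (\<lambda>k. w' ! k) [0..<m mod n]"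
          proof (rule map_cong[OF refl])
            fix k assume "k \<in> set [0..<m mod n]"
            then have "k < m mod n" by simp
            moreover have "m mod n < n" using n0 by simp
            ultimately have "k < n" by linarith
            then show "w' ! (k mod n) = w' ! k" by simp
          qed
          also have "\<dots> = take (m mod n) w'" using n0 lw' by (intro map_nth_take) simp
          finally show ?thesis .
        qed
        finally have "map x [i..j] = concat (replicate (m div n) w') @ take (m mod n) w'" .
        moreover have "m div n > 0 \<or> m mod n > 0" using m0 n0
          by (metis div_mult_mod_eq add_0 mult_0 neq0_conv)
        ultimately show "word_prod G (map x [i..j]) \<noteq> \<one>"
          using key[of w' "m mod n" "m div n"] rot lw' n0 unfolding w'_def by simp
      qed
      moreover have "periodic x"
        unfolding periodic_def shift_def
        by (rule exI[of _ "int n"]) (use n0 in \<open>auto simp: x_def\<close>)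
      ultimately show False using ap unfolding aperiodic_def by blast
    qed
  qed
qed

end
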